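(* Let the initial shared state be the two-qutrit Bell-diagonal state of a qutrit depolarizing channel with parameter $p=p_{00}>1/3$, i.e. Bell probabilities $q_{00}=p$ and $q_{nm}=(1-p)/8$ for $(n,m)\ne(0,0)$. Then the mCAEPP with $m$ carriers per round, conditioned on successful post-selection in every round, purifies the shared state to unit asymptotic fidelity: the fidelity $q_{00}$ of the accepted state tends to $1$ in the limit of many rounds and a large number $m$ of carriers per round.
   Context: Bell-diagonal two-qutrit states are described by probabilities $q=(q_{st})_{s,t\in\{0,1,2\}}$ on the Bell states $|\Phi^{s,t}\rangle=\frac1{\sqrt3}\sum_j e^{2\pi i tj/3}|j,(j+s)\bmod3\rangle$; the fidelity is $q_{00}$. One round of the mCAEPP with $m$ carriers (built from the stabilizer generators $X_1X_m^2,\dots,X_{m-1}X_m^2,Z_0Z_1\cdots Z_m$) acts on $q$ as follows. Pre-processing by local unitaries relabels the probabilities to $r=(r_{00},r_{01},r_{02},r_{10},r_{11},r_{12},r_{20},r_{21},r_{22})=(q_{00},q_{21},q_{22},q_{10},q_{11},q_{12},q_{20},q_{01},q_{02})$. Random error labels $(x_0,z_0)$ with $P(x_0=i,z_0=j)=r_{ij}$ (shared pair) and independent i.i.d. $(x_k,z_k)$, $k=1,\dots,m$ (carriers, passing through the same depolarizing channel) with $P(x_k=0,z_k=0)=p$ and $P(x_k=i,z_k=j)=(1-p)/8$ otherwise, all in $\{0,1,2\}$. The round succeeds iff $z_i\equiv z_m \pmod 3$ for $i=1,\dots,m-1$ and $\sum_{j=0}^m x_j\equiv0\pmod3$; the output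 Bell label is $(s,t)=(x_0,(z_0-z_1)\bmod 3)$, and the new distribution is $q'_{st}=P(\text{success},s,t)/P(\text{success})$. Rounds are iterated on the accepted state. *)

theory Defs
  imports "HOL-Analysis.Analysis"
begin

text \<open>Bell-diagonal two-qutrit states: probability tables q s t with s t in {0,1,2}
  (stored as functions nat => nat => real; only arguments in {0,1,2} matter).\<close>

type_synonym bell_dist = "nat \<Rightarrow> nat \<Rightarrow> real"

definition depol :: "real \<Rightarrow> bell_dist" where
  "depol p = (\<lambda>s t. if s = 0 \<and> t = 0 then p else (1 - p) / 8)"

definition relabel :: "bell_dist \<Rightarrow> bell_dist" where
  "relabel q = (\<lambda>s t.
     if s = 0 \<and> t = 1 then q 2 1
     else if s = 0 \<and> t = 2 then q 2 2
     else if s = 2 \<and> t = 1 then q 0 1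
     else if s = 2 \<and> t = 2 then q 0 2
     else q s t)"

text \<open>Joint probability of success and output label (s,t) in one round with m carriers,
  each carrier having error labels distributed by the depolarizing channel with parameter p.
  Carrier labels are functions xs zs : {1..m} -> {0,1,2}.\<close>
definition succ_joint :: "nat \<Rightarrow> real \<Rightarrow> bell_dist \<Rightarrow> nat \<Rightarrow> nat \<Rightarrow> real" where
  "succ_joint m p q s t =
     (\<Sum>x0\<in>{0..2::nat}. \<Sum>z0\<in>{0..2::nat}.
      \<Sum>xs\<in>({1..m} \<rightarrow>\<^sub>E {0..2::nat}). \<Sum>zs\<in>({1..m} \<rightarrow>\<^sub>E {0..2::nat}).
        (if (\<forall>i\<in>{1..<m}. zs i mod 3 = zs m mod 3)
            \<and> (x0 + (\<Sum>k\<in>{1..m}. xs k)) mod 3 = 0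
            \<and> x0 = s \<and> (z0 + 3 - zs 1) mod 3 = t
         then relabel q x0 z0 * (\<Prod>k\<in>{1..m}. depol p (xs k) (zs k))
         else 0))"

definition succ_prob :: "nat \<Rightarrow> real \<Rightarrow> bell_dist \<Rightarrow> real" where
  "succ_prob m p q = (\<Sum>s\<in>{0..2::nat}. \<Sum>t\<in>{0..2::nat}. succ_joint m p q s t)"

definition mcaepp_round :: "nat \<Rightarrow> real \<Rightarrow> bell_dist \<Rightarrow> bell_dist" where
  "mcaepp_round m p q = (\<lambda>s t. succ_joint m p q s t / succ_prob m p q)"

definition fidelity_after :: "nat \<Rightarrow> real \<Rightarrow> nat \<Rightarrow> real" where
  "fidelity_after m p n = ((mcaepp_round m p ^^ n) (depol p)) 0 0"

end

theory Submission imports Defs begin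



definition Tsum :: "nat set \<Rightarrow> (nat \<Rightarrow> real) \<Rightarrow> nat \<Rightarrow> real" where
  "Tsum I w j = (\<Sum>xs\<in>I \<rightarrow>\<^sub>E {0..2::nat}. if (j + (\<Sum>k\<in>I. xs k)) mod 3 = 0 then (\<Prod>k\<in>I. w (xs k)) else 0)"

lemma Tsum_insert:
  assumes "finite I" "i \<notin> I"
  shows "Tsum (insert i I) w j = (\<Sum>y\<in>{0..2::nat}. w y * Tsum I w (j + y))"
proof -
  let ?h = "\<lambda>(y::nat, g::nat\<Rightarrow>nat). g(i := y)"
  let ?f = "\<lambda>xs. if (j + (\<Sum>k\<in>insert i I. xs k)) mod 3 = 0 then (\<Prod>k\<in>insert i I. w (xs k)) else (0::real)"
  have "Tsum (insert i I) w j = sum ?f (?h ` ({0..2} \<times> (I \<rightarrow>\<^sub>E {0..2})))"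
    unfolding Tsum_def PiE_insert_eq by simp
  also have "\<dots> = sum (?f \<circ> ?h) ({0..2} \<times> (I \<rightarrow>\<^sub>E {0..2}))"
    by (rule sum.reindex) (rule inj_combinator[OF assms(2)])
  also have "\<dots> = (\<Sum>y\<in>{0..2::nat}. \<Sum>g\<in>I \<rightarrow>\<^sub>E {0..2}. ?f (g(i:=y)))"
    unfolding sum.cartesian_product comp_def by (rule sum.cong[OF refl]) (simp only: case_prod_unfold)
  also have "\<dots> = (\<Sum>y\<in>{0..2::nat}. w y * Tsum I w (j + y))"
  proof (rule sum.cong[OF refl])
    fix y assume "y \<in> {0..2::nat}"
    have "(\<Sum>g\<in>I \<rightarrow>\<^sub>E {0..2}. ?f (g(i:=y))) = (\<Sum>g\<in>I \<rightarrow>\<^sub>E {0..2}. w y * (if (j + y + (\<Sum>k\<in>I. g k)) mod 3 = 0 then (\<Prod>k\<in>I. w (g k)) else 0))"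
    proof (rule sum.cong[OF refl])
      fix g assume "g \<in> I \<rightarrow>\<^sub>E {0..2::nat}"
      have s0: "(\<Sum>k\<in>I. (g(i:=y)) k) = (\<Sum>k\<in>I. g k)"
        by (rule sum.cong) (use assms in auto)
      have p0: "(\<Prod>k\<in>I. w ((g(i:=y)) k)) = (\<Prod>k\<in>I. w (g k))"
        by (rule prod.cong) (use assms in auto)
      have s: "(\<Sum>k\<in>insert i I. (g(i:=y)) k) = y + (\<Sum>k\<in>I. g k)"
        using assms s0 by (subst sum.insert) auto
      have p: "(\<Prod>k\<in>insert i I. w ((g(i:=y)) k)) = w y * (\<Prod>k\<in>I. w (g k))"
        using assms p0 by (subst prod.insert) auto
      show "?f (g(i:=y)) = w y * (if (j + y + (\<Sum>k\<in>I. g k)) mod 3 = 0 then (\<Prod>k\<in>I. w (g k)) else 0)"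
        by (simp only: s p add.assoc) simp
    qed
    also have "\<dots> = w y * Tsum I w (j + y)"
      unfolding Tsum_def by (simp add: sum_distrib_left)
    finally show "(\<Sum>g\<in>I \<rightarrow>\<^sub>E {0..2}. ?f (g(i:=y))) = w y * Tsum I w (j + y)" .
  qed
  finally show ?thesis .
qed

lemma Tsum_formula:
  assumes "finite I" and w12: "w 2 = w 1"
  shows "Tsum I w j = (if j mod 3 = 0 then ((w 0 + w 1 + w 2)^card I + 2*(w 0 - w 1)^card I)/3
                       else ((w 0 + w 1 + w 2)^card I - (w 0 - w 1)^card I)/3)"
  using assms(1)
proof (induction I arbitrary: j rule: finite_induct)
  case empty
  show ?case by (simp add: Tsum_def)
next
  case (insert i I)
  have e: "{0..2::nat} = {0,1,2}" by auto
  have "Tsum (insert i I) w j = w 0 * Tsum I w j + w 1 * Tsum I w (j+1) + w 2 * Tsum I w (j+2)"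
    using Tsum_insert[OF insert(1,2)] by (simp add: e)
  also have "\<dots> = (if j mod 3 = 0 then ((w 0 + w 1 + w 2)^card (insert i I) + 2*(w 0 - w 1)^card (insert i I))/3
                       else ((w 0 + w 1 + w 2)^card (insert i I) - (w 0 - w 1)^card (insert i I))/3)"
  proof -
    define S where "S = (w 0 + w 1 + w 2)^card I"
    define D where "D = (w 0 - w 1)^card I"
    have c: "card (insert i I) = Suc (card I)" using insert(1,2) by simp
    have S': "(w 0 + w 1 + w 2)^card (insert i I) = (w 0 + w 1 + w 2) * S" unfolding c S_def by simp
    have D': "(w 0 - w 1)^card (insert i I) = (w 0 - w 1) * D" unfolding c D_def by simp
    have Sd: "(w 0 + w 1 + w 2)^card I = S" by (simp add: S_def)
    have Dd: "(w 0 - w 1)^card I = D" by (simp add: D_def)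
    have m: "j mod 3 = 0 \<or> j mod 3 = 1 \<or> j mod 3 = 2" by presburger
    show ?thesis
    proof (rule disjE[OF m])
      assume h: "j mod 3 = 0"
      have "(j+1) mod 3 \<noteq> 0" "(j+2) mod 3 \<noteq> 0" using h by presburger+
      then show ?thesis unfolding insert.IH S' D' Sd Dd using h w12
        by (simp add: field_simps)
    next
      assume "j mod 3 = 1 \<or> j mod 3 = 2"
      then show ?thesis
      proof
        assume h: "j mod 3 = 1"
        have "(j+1) mod 3 \<noteq> 0" "(j+2) mod 3 = 0" using h by presburger+
        then show ?thesis unfolding insert.IH S' D' Sd Dd using h w12
          by (simp add: field_simps)
      next
        assume h: "j mod 3 = 2"
        have "(j+1) mod 3 = 0" "(j+2) mod 3 \<noteq> 0" using h by presburger+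
        then show ?thesis unfolding insert.IH S' D' Sd Dd using h w12
          by (simp add: field_simps)
      qed
    qed
  qed
  finally show ?case .
qed



lemma const_funs:
  fixes m :: nat
  assumes "1 \<le> m"
  shows "{zs \<in> {1..m} \<rightarrow>\<^sub>E {0..2::nat}. \<forall>i\<in>{1..<m}. zs i mod 3 = zs m mod 3}
       = (\<lambda>c. restrict (\<lambda>_. c) {1..m}) ` {0..2}"
proof
  show "{zs \<in> {1..m} \<rightarrow>\<^sub>E {0..2::nat}. \<forall>i\<in>{1..<m}. zs i mod 3 = zs m mod 3}
       \<subseteq> (\<lambda>c. restrict (\<lambda>_. c) {1..m}) ` {0..2}"
  proof
    fix zs assume h: "zs \<in> {zs \<in> {1..m} \<rightarrow>\<^sub>E {0..2::nat}. \<forall>i\<in>{1..<m}. zs i mod 3 = zs m mod 3}"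
    have "m \<in> {1..m}" using assms by simp
    then have zm: "zs m \<in> {0..2}" using h PiE_mem by fastforce
    have "zs = restrict (\<lambda>_. zs m) {1..m}"
    proof
      fix k show "zs k = restrict (\<lambda>_. zs m) {1..m} k"
      proof (cases "k \<in> {1..m}")
        case True
        show ?thesis
        proof (cases "k = m")
          case False
          then have "k \<in> {1..<m}" using True by auto
          then have "zs k mod 3 = zs m mod 3" using h by auto
          moreover have "zs k \<in> {0..2}" using h True PiE_mem by fastforce
          ultimately show ?thesis using zm True by auto
        qed (use True in auto)
      next
        case False then show ?thesis using h by auto
      qed
    qed
    then show "zs \<in> (\<lambda>c. restrict (\<lambda>_. c) {1..m}) ` {0..2}" using zm by blast
  qed
next
  show "(\<lambda>c. restrict (\<lambda>_. c) {1..m}) ` {0..2}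
     \<subseteq> {zs \<in> {1..m} \<rightarrow>\<^sub>E {0..2::nat}. \<forall>i\<in>{1..<m}. zs i mod 3 = zs m mod 3}"
    using assms by auto
qed

lemma sum_const_funs:
  fixes m :: nat
  assumes "1 \<le> m"
  shows "(\<Sum>zs\<in>{1..m} \<rightarrow>\<^sub>E {0..2::nat}. if (\<forall>i\<in>{1..<m}. zs i mod 3 = zs m mod 3) then \<Phi> zs else (0::real))
       = (\<Sum>c\<in>{0..2}. \<Phi> (restrict (\<lambda>_. c) {1..m}))"
proof -
  have "(\<Sum>zs\<in>{1..m} \<rightarrow>\<^sub>E {0..2::nat}. if (\<forall>i\<in>{1..<m}. zs i mod 3 = zs m mod 3) then \<Phi> zs else (0::real))
      = sum \<Phi> {zs \<in> {1..m} \<rightarrow>\<^sub>E {0..2::nat}. \<forall>i\<in>{1..<m}. zs i mod 3 = zs m mod 3}"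
    by (rule sum.inter_filter[symmetric]) (intro finite_PiE, auto)
  also have "\<dots> = sum \<Phi> ((\<lambda>c. restrict (\<lambda>_. c) {1..m}) ` {0..2})"
    using const_funs[OF assms] by simp
  also have "\<dots> = sum (\<Phi> \<circ> (\<lambda>c. restrict (\<lambda>_. c) {1..m})) {0..2}"
  proof (rule sum.reindex)
    show "inj_on (\<lambda>c. restrict (\<lambda>_. c) {1..m}) {0..2::nat}"
    proof
      fix x y :: nat assume "restrict (\<lambda>_. x) {1..m} = restrict (\<lambda>_. y) {1..m}"
      then have "restrict (\<lambda>_. x) {1..m} 1 = restrict (\<lambda>_. y) {1..m} 1" by simp
      then show "x = y" using assms by simp
    qed
  qed
  finally show ?thesis by simp
qed

definition JJ :: "nat \<Rightarrow> real \<Rightarrow> bell_dist \<Rightarrow> nat \<Rightarrow> nat \<Rightarrow> real" where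
  "JJ m p q s t = (\<Sum>z0\<in>{0..2::nat}. \<Sum>c\<in>{0..2::nat}.
     if (z0 + 3 - c) mod 3 = t then relabel q s z0 * Tsum {1..m} (\<lambda>x. depol p x c) s else 0)"

lemma succ_joint_JJ:
  assumes m: "1 \<le> m" and s: "s \<le> 2"
  shows "succ_joint m p q s t = JJ m p q s t"
proof -
  define P where "P = (\<lambda>x0 z0 xs zs. (\<forall>i\<in>{1..<m}. zs i mod 3 = zs m mod 3)
            \<and> (x0 + (\<Sum>k\<in>{1..m}. xs k)) mod 3 = 0
            \<and> x0 = s \<and> (z0 + 3 - zs 1) mod 3 = t)"
  define f where "f = (\<lambda>x0. \<Sum>z0\<in>{0..2::nat}.
      \<Sum>xs\<in>({1..m} \<rightarrow>\<^sub>E {0..2::nat}). \<Sum>zs\<in>({1..m} \<rightarrow>\<^sub>E {0..2::nat}).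
        (if P x0 z0 xs zs then relabel q x0 z0 * (\<Prod>k\<in>{1..m}. depol p (xs k) (zs k)) else (0::real)))"
  have sj: "succ_joint m p q s t = sum f {0..2}"
    unfolding succ_joint_def f_def P_def by simp
  have "sum f {0..2} = f s + sum f ({0..2} - {s})"
    by (rule sum.remove) (use s in auto)
  moreover have "sum f ({0..2} - {s}) = 0"
    unfolding f_def P_def by (intro sum.neutral ballI) auto
  ultimately have sj2: "succ_joint m p q s t = f s" using sj by simp
  have "f s = (\<Sum>z0\<in>{0..2::nat}. \<Sum>c\<in>{0..2::nat}.
     if (z0 + 3 - c) mod 3 = t then relabel q s z0 * Tsum {1..m} (\<lambda>x. depol p x c) s else 0)"
    unfolding f_def
  proof (rule sum.cong[OF refl])
    fix z0 assume "z0 \<in> {0..2::nat}"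
    have "(\<Sum>xs\<in>({1..m} \<rightarrow>\<^sub>E {0..2::nat}). \<Sum>zs\<in>({1..m} \<rightarrow>\<^sub>E {0..2::nat}).
        (if P s z0 xs zs then relabel q s z0 * (\<Prod>k\<in>{1..m}. depol p (xs k) (zs k)) else (0::real)))
      = (\<Sum>zs\<in>({1..m} \<rightarrow>\<^sub>E {0..2::nat}). \<Sum>xs\<in>({1..m} \<rightarrow>\<^sub>E {0..2::nat}).
        (if P s z0 xs zs then relabel q s z0 * (\<Prod>k\<in>{1..m}. depol p (xs k) (zs k)) else (0::real)))"
      by (rule sum.swap)
    also have "\<dots> = (\<Sum>zs\<in>({1..m} \<rightarrow>\<^sub>E {0..2::nat}). if (\<forall>i\<in>{1..<m}. zs i mod 3 = zs m mod 3) then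
        (\<Sum>xs\<in>({1..m} \<rightarrow>\<^sub>E {0..2::nat}).
        (if (s + (\<Sum>k\<in>{1..m}. xs k)) mod 3 = 0 \<and> (z0 + 3 - zs 1) mod 3 = t
           then relabel q s z0 * (\<Prod>k\<in>{1..m}. depol p (xs k) (zs k)) else (0::real))) else 0)"
      unfolding P_def by (rule sum.cong[OF refl]) (auto intro!: sum.neutral)
    also have "\<dots> = (\<Sum>c\<in>{0..2::nat}. (\<Sum>xs\<in>({1..m} \<rightarrow>\<^sub>E {0..2::nat}).
        (if (s + (\<Sum>k\<in>{1..m}. xs k)) mod 3 = 0 \<and> (z0 + 3 - restrict (\<lambda>_. c) {1..m} 1) mod 3 = t
           then relabel q s z0 * (\<Prod>k\<in>{1..m}. depol p (xs k) (restrict (\<lambda>_. c) {1..m} k)) else (0::real))))"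
      by (rule sum_const_funs[OF m])
    also have "\<dots> = (\<Sum>c\<in>{0..2::nat}. if (z0 + 3 - c) mod 3 = t then relabel q s z0 * Tsum {1..m} (\<lambda>x. depol p x c) s else 0)"
    proof (rule sum.cong[OF refl])
      fix c assume "c \<in> {0..2::nat}"
      have r1: "restrict (\<lambda>_. c) {1..m} 1 = c" using m by simp
      have pr: "\<And>xs. (\<Prod>k\<in>{1..m}. depol p (xs k) (restrict (\<lambda>_. c) {1..m} k)) = (\<Prod>k\<in>{1..m}. depol p (xs k) c)"
        by (rule prod.cong) auto
      show "(\<Sum>xs\<in>({1..m} \<rightarrow>\<^sub>E {0..2::nat}).
        (if (s + (\<Sum>k\<in>{1..m}. xs k)) mod 3 = 0 \<and> (z0 + 3 - restrict (\<lambda>_. c) {1..m} 1) mod 3 = t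
           then relabel q s z0 * (\<Prod>k\<in>{1..m}. depol p (xs k) (restrict (\<lambda>_. c) {1..m} k)) else (0::real)))
        = (if (z0 + 3 - c) mod 3 = t then relabel q s z0 * Tsum {1..m} (\<lambda>x. depol p x c) s else 0)"
        unfolding r1 pr Tsum_def
        by (cases "(z0 + 3 - c) mod 3 = t") (auto simp: sum_distrib_left intro!: sum.cong)
    qed
    finally show "(\<Sum>xs\<in>({1..m} \<rightarrow>\<^sub>E {0..2::nat}). \<Sum>zs\<in>({1..m} \<rightarrow>\<^sub>E {0..2::nat}).
        (if P s z0 xs zs then relabel q s z0 * (\<Prod>k\<in>{1..m}. depol p (xs k) (zs k)) else (0::real)))
      = (\<Sum>c\<in>{0..2::nat}. if (z0 + 3 - c) mod 3 = t then relabel q s z0 * Tsum {1..m} (\<lambda>x. depol p x c) s else 0)" .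
  qed
  then show ?thesis using sj2 unfolding JJ_def by simp
qed




lemma Tsum_depol:
  assumes m: "1 \<le> m" and c: "c \<le> 2" and s: "s \<le> 2"
  shows "Tsum {1..m} (\<lambda>x. depol p x c) s =
    (if c = 0 then (if s = 0 then ((p + 2*((1-p)/8))^m + 2*(p - (1-p)/8)^m)/3
                    else ((p + 2*((1-p)/8))^m - (p - (1-p)/8)^m)/3)
     else (3*((1-p)/8))^m/3)"
proof -
  have w: "(\<lambda>x. depol p x c) 2 = (\<lambda>x. depol p x c) 1" by (simp add: depol_def)
  have sm: "(s mod 3 = 0) = (s = 0)" using s by auto
  have m0: "(0::real)^m = 0" using m by simp
  have cs: "card {1..m} = m" by simp
  show ?thesis
  proof (cases "c = 0")
    case True
    have a: "depol p 0 c + depol p 1 c + depol p 2 c = p + 2*((1-p)/8)"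
      "depol p 0 c - depol p 1 c = p - (1-p)/8" using True by (simp_all add: depol_def)
    show ?thesis
      unfolding Tsum_formula[OF finite_atLeastAtMost w] cs a sm using True by simp
  next
    case False
    have a: "depol p 0 c + depol p 1 c + depol p 2 c = 3*((1-p)/8)"
      "depol p 0 c - depol p 1 c = 0" using False by (simp_all add: depol_def)
    show ?thesis
      unfolding Tsum_formula[OF finite_atLeastAtMost w] cs a sm using False m0 by simp
  qed
qed

definition emb :: "real \<times> real \<times> real \<times> real \<times> real \<Rightarrow> bell_dist" where
  "emb v = (case v of (F,G,H,K,L) \<Rightarrow> \<lambda>s t. if s = 0 then (if t = 0 then F else G)
      else if s = 1 then H else (if t = 0 then K else L))"

fun stp :: "real \<Rightarrow> real \<Rightarrow> real \<times> real \<times> real \<times> real \<times> real \<Rightarrow> real \<times> real \<times> real \<times> real \<times> real" where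
  "stp \<delta> \<epsilon> (F,G,H,K,L) = ((1+2*\<delta>)*F + 2*\<epsilon>*L, (1+2*\<delta>)*L + \<epsilon>*(F+L), (1-\<delta>+2*\<epsilon>)*H,
      (1-\<delta>)*K + 2*\<epsilon>*G, (1-\<delta>+\<epsilon>)*G + \<epsilon>*K)"

fun tot :: "real \<times> real \<times> real \<times> real \<times> real \<Rightarrow> real" where
  "tot (F,G,H,K,L) = F + 2*G + 3*H + K + 2*L"

lemma JJ_emb:
  fixes p :: real and m :: nat
  assumes m: "1 \<le> m" and s: "s \<le> 2" and t: "t \<le> 2"
    and q: "\<And>s t. s \<le> 2 \<Longrightarrow> t \<le> 2 \<Longrightarrow> q s t = emb u s t / T"
  defines "A \<equiv> (p + 2*((1-p)/8))^m" and "D \<equiv> (p - (1-p)/8)^m" and "B \<equiv> (3*((1-p)/8))^m"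
  assumes A: "A > 0"
  shows "JJ m p q s t = (A/(3*T)) * emb (stp (D/A) (B/A) u) s t"
proof -
  obtain F G H K L where u: "u = (F,G,H,K,L)" by (cases u) auto
  define \<delta> where "\<delta> = D/A"
  define \<epsilon> where "\<epsilon> = B/A"
  have D: "D = \<delta>*A" and B: "B = \<epsilon>*A" using A unfolding \<delta>_def \<epsilon>_def by auto
  have e3: "{0..2::nat} = {0,1,2}" by auto
  have T0: "\<And>c. c \<le> 2 \<Longrightarrow> Tsum {1..m} (\<lambda>x. depol p x c) s =
    (if c = 0 then (if s = 0 then (A + 2*D)/3 else (A - D)/3) else B/3)"
    using Tsum_depol[OF m _ s] unfolding A_def D_def B_def by simp
  define Tv where "Tv = (\<lambda>c::nat. if c = 0 then (if s = 0 then (A + 2*D)/3 else (A - D)/3) else B/3)"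
  have JJ': "JJ m p q s t = (\<Sum>z0\<in>{0,1,2::nat}. \<Sum>c\<in>{0,1,2::nat}.
     if (z0 + 3 - c) mod 3 = t then relabel q s z0 * Tv c else 0)"
    unfolding JJ_def e3[symmetric] Tv_def
    apply (intro sum.cong refl)
    apply (subst T0)
    by auto
  have ss: "s = 0 \<or> s = 1 \<or> s = 2" using s by auto
  have tt: "t = 0 \<or> t = 1 \<or> t = 2" using t by auto
  show ?thesis
  proof (cases "T = 0")
    case True
    then show ?thesis unfolding JJ' using ss
      by (auto simp: relabel_def q)
  next
    case False
    show ?thesis
      unfolding JJ' \<delta>_def[symmetric] \<epsilon>_def[symmetric]
      using ss tt False A
      by (auto simp: Tv_def relabel_def q emb_def u D B field_simps)
  qed
qed

lemma round_emb:
  fixes p :: real and m :: nat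
  assumes m: "1 \<le> m" and s: "s \<le> 2" and t: "t \<le> 2"
    and q: "\<And>s t. s \<le> 2 \<Longrightarrow> t \<le> 2 \<Longrightarrow> q s t = emb u s t / T"
  defines "A \<equiv> (p + 2*((1-p)/8))^m" and "D \<equiv> (p - (1-p)/8)^m" and "B \<equiv> (3*((1-p)/8))^m"
  assumes A: "A > 0" and T: "T \<noteq> 0"
  shows "mcaepp_round m p q s t = emb (stp (D/A) (B/A) u) s t / tot (stp (D/A) (B/A) u)"
proof -
  have J: "\<And>s t. s \<le> 2 \<Longrightarrow> t \<le> 2 \<Longrightarrow> succ_joint m p q s t = (A/(3*T)) * emb (stp (D/A) (B/A) u) s t"
    using succ_joint_JJ[OF m] JJ_emb[OF m _ _ q] A unfolding A_def D_def B_def by simp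
  have e3: "{0..2::nat} = {0,1,2}" by auto
  obtain F G H K L where u: "stp (D/A) (B/A) u = (F,G,H,K,L)" by (cases "stp (D/A) (B/A) u") auto
  have P: "succ_prob m p q = (A/(3*T)) * tot (stp (D/A) (B/A) u)"
    unfolding succ_prob_def e3 using J T by (simp add: u emb_def) (simp add: field_simps)
  show ?thesis unfolding mcaepp_round_def P J[OF s t] using A T by simp
qed




definition inv5 :: "real \<Rightarrow> real \<Rightarrow> real \<Rightarrow> real \<Rightarrow> real \<Rightarrow> real \<times> real \<times> real \<times> real \<times> real \<Rightarrow> bool" where
  "inv5 \<delta> \<epsilon> X Y c v = (case v of (F,G,H,K,L) \<Rightarrow> F > 0 \<and> G \<ge> 0 \<and> H \<ge> 0 \<and> K \<ge> 0 \<and> L \<ge> 0 \<and>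
      (G + (1+\<delta>)*L + (1+\<delta>)*K)/F \<le> c + X \<and> H/F \<le> Y)"

lemma inv5_step:
  assumes d: "0 < \<delta>" "\<delta> \<le> 1" and e: "0 \<le> \<epsilon>" "5*\<epsilon> \<le> \<delta>"
    and c: "c = \<epsilon>/(\<delta>-\<epsilon>)"
    and X: "X \<ge> 0" and Y: "Y \<ge> 0"
    and I: "inv5 \<delta> \<epsilon> X Y c v"
  shows "inv5 \<delta> \<epsilon> (((1+\<delta>+\<epsilon>)/(1+2*\<delta>))*X) (((1-\<delta>+2*\<epsilon>)/(1+2*\<delta>))*Y) c (stp \<delta> \<epsilon> v)"
proof -
  obtain F G H K L where v: "v = (F,G,H,K,L)" by (cases v) auto
  have F: "F > 0" and G: "G \<ge> 0" and H: "H \<ge> 0" and K: "K \<ge> 0" and L: "L \<ge> 0"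
    and V: "(G + (1+\<delta>)*L + (1+\<delta>)*K)/F \<le> c + X" and HY: "H/F \<le> Y"
    using I unfolding inv5_def v by auto
  define lam0 where "lam0 = 1+2*\<delta>"
  define \<kappa> where "\<kappa> = 1+\<delta>+\<epsilon>"
  define V where "V = G + (1+\<delta>)*L + (1+\<delta>)*K"
  define F' where "F' = (1+2*\<delta>)*F + 2*\<epsilon>*L"
  define G' where "G' = (1+2*\<delta>)*L + \<epsilon>*(F+L)"
  define H' where "H' = (1-\<delta>+2*\<epsilon>)*H"
  define K' where "K' = (1-\<delta>)*K + 2*\<epsilon>*G"
  define L' where "L' = (1-\<delta>+\<epsilon>)*G + \<epsilon>*K"
  have sv: "stp \<delta> \<epsilon> v = (F',G',H',K',L')" unfolding v F'_def G'_def H'_def K'_def L'_def by simp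
  have lam: "lam0 > 0" unfolding lam0_def using d by simp
  have F'ge: "F' \<ge> lam0 * F" unfolding F'_def lam0_def using e L by simp
  have "lam0 * F > 0" using lam F by simp
  then have F'pos: "F' > 0" using F'ge by linarith
  have G'nn: "G' \<ge> 0" unfolding G'_def using d e F L by simp
  have H'nn: "H' \<ge> 0" unfolding H'_def using d e H by simp
  have K'nn: "K' \<ge> 0" unfolding K'_def using d e K G by simp
  have L'nn: "L' \<ge> 0" unfolding L'_def using d e K G by simp
  have V'eq: "G' + (1+\<delta>)*L' + (1+\<delta>)*K' = \<epsilon>*F + (lam0+\<epsilon>)*L + (1+\<delta>)*(1-\<delta>+3*\<epsilon>)*G + (1+\<delta>)*(1-\<delta>+\<epsilon>)*K"
    unfolding G'_def L'_def K'_def lam0_def by (simp add: algebra_simps)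
  have c1: "(lam0+\<epsilon>)*L \<le> (\<kappa>*(1+\<delta>))*L"
    by (rule mult_right_mono) (use L d e in \<open>auto simp: lam0_def \<kappa>_def algebra_simps\<close>)
  have "(1+\<delta>)*(1-\<delta>+3*\<epsilon>) \<le> \<kappa>"
  proof -
    have a: "\<epsilon>*\<delta> \<le> \<epsilon>" using e d by (simp add: mult_left_le)
    have b: "\<delta>*\<delta> \<ge> 0" by simp
    have q: "(1+\<delta>)*(1-\<delta>+3*\<epsilon>) = 1 - \<delta>*\<delta> + 3*\<epsilon> + 3*(\<epsilon>*\<delta>)" by (simp add: algebra_simps)
    show ?thesis unfolding \<kappa>_def q using a b e d by linarith
  qed
  then have c2: "(1+\<delta>)*(1-\<delta>+3*\<epsilon>)*G \<le> \<kappa>*G" by (rule mult_right_mono) (use G in auto)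
  have c3: "(1+\<delta>)*(1-\<delta>+\<epsilon>)*K \<le> \<kappa>*(1+\<delta>)*K"
    by (intro mult_right_mono mult_left_mono) (use K d e in \<open>auto simp: \<kappa>_def\<close>)
  have V'le: "G' + (1+\<delta>)*L' + (1+\<delta>)*K' \<le> \<kappa>*V + \<epsilon>*F"
    unfolding V'eq V_def using c1 c2 c3 by (simp add: algebra_simps)
  have cX: "V/F \<le> c + X" using V unfolding V_def .
  have "(G' + (1+\<delta>)*L' + (1+\<delta>)*K')/F' \<le> (\<kappa>*V + \<epsilon>*F)/(lam0*F)"
  proof (rule frac_le)
    have "V \<ge> 0" unfolding V_def using G L K d by simp
    moreover have "\<kappa> \<ge> 0" unfolding \<kappa>_def using d e by simp
    ultimately show "0 \<le> \<kappa>*V + \<epsilon>*F" using e F by simp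
  qed (use V'le lam F F'ge in auto)
  also have "\<dots> = (\<kappa>/lam0)*(V/F) + \<epsilon>/lam0" using F lam by (simp add: field_simps)
  also have "\<dots> \<le> (\<kappa>/lam0)*(c+X) + \<epsilon>/lam0"
    by (intro add_right_mono mult_left_mono cX) (use lam d e in \<open>auto simp: \<kappa>_def\<close>)
  also have "\<dots> = c + (\<kappa>/lam0)*X"
  proof -
    have p: "\<delta> - \<epsilon> > 0" using d e by simp
    have ce: "\<epsilon> = (\<delta> - \<epsilon>) * c" unfolding c using p by simp
    have kl: "\<kappa> + (\<delta> - \<epsilon>) = lam0" unfolding \<kappa>_def lam0_def by simp
    have "(\<kappa>/lam0)*(c+X) + \<epsilon>/lam0 = (\<kappa>*c + \<epsilon>)/lam0 + (\<kappa>/lam0)*X"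
      by (simp add: add_divide_distrib diff_divide_distrib algebra_simps)
    also have "\<kappa>*c + \<epsilon> = lam0 * c" unfolding kl[symmetric] by (subst ce) (simp add: algebra_simps)
    finally show ?thesis using lam by simp
  qed
  finally have R1: "(G' + (1+\<delta>)*L' + (1+\<delta>)*K')/F' \<le> c + ((1+\<delta>+\<epsilon>)/(1+2*\<delta>))*X"
    unfolding \<kappa>_def lam0_def .
  have "H'/F' \<le> H'/(lam0*F)"
    by (rule divide_left_mono) (use H'nn F'ge lam F F'pos in auto)
  also have "\<dots> = ((1-\<delta>+2*\<epsilon>)/lam0) * (H/F)" unfolding H'_def using lam F by simp
  also have "\<dots> \<le> ((1-\<delta>+2*\<epsilon>)/lam0) * Y" by (rule mult_left_mono[OF HY]) (use lam d e in simp)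
  finally have R2: "H'/F' \<le> ((1-\<delta>+2*\<epsilon>)/(1+2*\<delta>)) * Y" unfolding lam0_def .
  show ?thesis unfolding inv5_def sv using F'pos G'nn H'nn K'nn L'nn R1 R2 by simp
qed




lemma inv5_iter:
  assumes d: "0 < \<delta>" "\<delta> \<le> 1" and e: "0 \<le> \<epsilon>" "5*\<epsilon> \<le> \<delta>"
    and c: "c = \<epsilon>/(\<delta>-\<epsilon>)"
    and X: "X \<ge> 0" and Y: "Y \<ge> 0"
    and I: "inv5 \<delta> \<epsilon> X Y c v"
  shows "inv5 \<delta> \<epsilon> (((1+\<delta>+\<epsilon>)/(1+2*\<delta>))^n*X) (((1-\<delta>+2*\<epsilon>)/(1+2*\<delta>))^n*Y) c ((stp \<delta> \<epsilon> ^^ n) v)"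
proof (induction n)
  case 0 then show ?case using I by simp
next
  case (Suc n)
  have mu: "(1+\<delta>+\<epsilon>)/(1+2*\<delta>) \<ge> 0" using d e by simp
  have nu: "(1-\<delta>+2*\<epsilon>)/(1+2*\<delta>) \<ge> 0" using d e by simp
  have "inv5 \<delta> \<epsilon> (((1+\<delta>+\<epsilon>)/(1+2*\<delta>)) * (((1+\<delta>+\<epsilon>)/(1+2*\<delta>))^n*X))
      (((1-\<delta>+2*\<epsilon>)/(1+2*\<delta>)) * (((1-\<delta>+2*\<epsilon>)/(1+2*\<delta>))^n*Y)) c (stp \<delta> \<epsilon> ((stp \<delta> \<epsilon> ^^ n) v))"
    by (rule inv5_step[OF d e c _ _ Suc.IH]) (use mu nu X Y in simp_all)
  then show ?case by (simp add: mult.assoc)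
qed

lemma inv5_fid:
  assumes "inv5 \<delta> \<epsilon> X Y c v" and d: "\<delta> > 0"
  shows "tot v > 0 \<and> \<bar>fst v / tot v - 1\<bar> \<le> 2*(c+X) + 3*Y"
proof -
  obtain F G H K L where v: "v = (F,G,H,K,L)" by (cases v) auto
  have F: "F > 0" and G: "G \<ge> 0" and H: "H \<ge> 0" and K: "K \<ge> 0" and L: "L \<ge> 0"
    and V: "(G + (1+\<delta>)*L + (1+\<delta>)*K)/F \<le> c + X" and HY: "H/F \<le> Y"
    using assms unfolding inv5_def v by auto
  have T: "tot v = F + (2*G+3*H+K+2*L)" unfolding v by simp
  have R: "2*G+3*H+K+2*L \<ge> 0" using G H K L by simp
  have Tp: "tot v > 0" using T R F by simp
  have "\<bar>fst v / tot v - 1\<bar> = (2*G+3*H+K+2*L) / tot v"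
    using Tp R unfolding T v by (simp add: field_simps)
  also have "\<dots> \<le> (2*G+3*H+K+2*L) / F"
    by (rule divide_left_mono) (use R F T in auto)
  also have "\<dots> \<le> 2*((G + (1+\<delta>)*L + (1+\<delta>)*K)/F) + 3*(H/F)"
  proof -
    have "2*G+3*H+K+2*L \<le> 2*(G + (1+\<delta>)*L + (1+\<delta>)*K) + 3*H"
      using G H K L d by (simp add: algebra_simps)
    then have "(2*G+3*H+K+2*L)/F \<le> (2*(G + (1+\<delta>)*L + (1+\<delta>)*K) + 3*H)/F"
      by (rule divide_right_mono) (use F in simp)
    also have "\<dots> = 2*((G + (1+\<delta>)*L + (1+\<delta>)*K)/F) + 3*(H/F)"
      by (simp add: add_divide_distrib)
    finally show ?thesis .
  qed
  also have "\<dots> \<le> 2*(c+X) + 3*Y" by (intro add_mono mult_left_mono V HY) auto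
  finally show ?thesis using Tp by simp
qed

lemma round_iter:
  fixes p :: real and m :: nat
  assumes m: "1 \<le> m"
  defines "A \<equiv> (p + 2*((1-p)/8))^m" and "D \<equiv> (p - (1-p)/8)^m" and "B \<equiv> (3*((1-p)/8))^m"
  assumes A: "A > 0"
    and pos: "\<And>n. tot ((stp (D/A) (B/A) ^^ n) (p, (1-p)/8, (1-p)/8, (1-p)/8, (1-p)/8)) > 0"
  shows "\<And>s t. s \<le> 2 \<Longrightarrow> t \<le> 2 \<Longrightarrow> (mcaepp_round m p ^^ n) (depol p) s t
     = emb ((stp (D/A) (B/A) ^^ n) (p, (1-p)/8, (1-p)/8, (1-p)/8, (1-p)/8)) s t
       / tot ((stp (D/A) (B/A) ^^ n) (p, (1-p)/8, (1-p)/8, (1-p)/8, (1-p)/8))"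
proof (induction n)
  case 0
  have "tot (p, (1-p)/8, (1-p)/8, (1-p)/8, (1-p)/8) = 1" by (simp add: field_simps)
  then show ?case using 0 by (auto simp: depol_def emb_def)
next
  case (Suc n)
  show ?case
    using round_emb[OF m Suc.prems, of "(mcaepp_round m p ^^ n) (depol p)", OF Suc.IH]
      A pos[of n] unfolding A_def D_def B_def by simp
qed




theorem theorem1:
  fixes p :: real
  assumes "1/3 < p" and "p \<le> 1"
  shows "\<forall>\<epsilon>>0. \<forall>\<^sub>F m in sequentially. \<forall>\<^sub>F n in sequentially.
           \<bar>fidelity_after m p n - 1\<bar> < \<epsilon>"
proof (intro allI impI)
  fix \<eta> :: real assume eta: "\<eta> > 0"
  define b where "b = (1-p)/8"
  have b0: "b \<ge> 0" using assms unfolding b_def by simp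
  have pb: "p - b > 0" "4*b < p" using assms unfolding b_def by simp_all
  define \<rho> where "\<rho> = 3*b/(p-b)"
  have rho0: "\<rho> \<ge> 0" unfolding \<rho>_def using b0 pb by simp
  have rho1: "\<rho> < 1" unfolding \<rho>_def using pb by simp
  define r where "r = min (1/5) (\<eta>/8)"
  have r0: "r > 0" unfolding r_def using eta by simp
  have "(\<lambda>m. \<rho>^m) \<longlonglongrightarrow> 0" by (rule LIMSEQ_power_zero) (use rho0 rho1 in simp)
  then have ev1: "\<forall>\<^sub>F m in sequentially. \<rho>^m < r" using r0 by (rule order_tendstoD(2))
  have ev2: "\<forall>\<^sub>F m in sequentially. 1 \<le> m" by (rule eventually_ge_at_top)
  show "\<forall>\<^sub>F m in sequentially. \<forall>\<^sub>F n in sequentially. \<bar>fidelity_after m p n - 1\<bar> < \<eta>"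
    using eventually_conj[OF ev1 ev2]
  proof (rule eventually_mono)
    fix m :: nat assume hm: "\<rho>^m < r \<and> 1 \<le> m"
    then have m: "1 \<le> m" and rm: "\<rho>^m < r" by auto
    define A where "A = (p + 2*b)^m"
    define D where "D = (p - b)^m"
    define B where "B = (3*b)^m"
    define \<delta> where "\<delta> = D/A"
    define \<epsilon> where "\<epsilon> = B/A"
    have A0: "A > 0" unfolding A_def using pb b0 by simp
    have D0: "D > 0" unfolding D_def using pb by simp
    have d0: "\<delta> > 0" unfolding \<delta>_def using A0 D0 by simp
    have d1: "\<delta> \<le> 1"
    proof -
      have "\<delta> = ((p-b)/(p+2*b))^m" unfolding \<delta>_def A_def D_def by (simp add: power_divide)
      moreover have "(p-b)/(p+2*b) \<le> 1" using pb b0 by simp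
      moreover have "(p-b)/(p+2*b) \<ge> 0" using pb b0 by simp
      ultimately show ?thesis by (simp add: power_le_one)
    qed
    have e0: "\<epsilon> \<ge> 0" unfolding \<epsilon>_def B_def using A0 b0 by simp
    have erho: "\<epsilon> = \<rho>^m * \<delta>"
      unfolding \<epsilon>_def \<delta>_def \<rho>_def B_def D_def using D0 A0 pb
      by (simp add: power_divide)
    have er: "\<epsilon> \<le> r * \<delta>" unfolding erho using rm d0 by simp
    have r5: "r \<le> 1/5" unfolding r_def by simp
    have "r * \<delta> \<le> (1/5) * \<delta>" by (rule mult_right_mono) (use r5 d0 in auto)
    then have e5: "5*\<epsilon> \<le> \<delta>" using er by simp
    define c where "c = \<epsilon>/(\<delta>-\<epsilon>)"
    have c0: "c \<ge> 0" unfolding c_def using e0 e5 d0 by simp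
    have cb: "c \<le> (5/4) * r"
    proof -
      have "c \<le> \<epsilon>/(4*\<delta>/5)" unfolding c_def
        by (rule divide_left_mono) (use e0 e5 d0 in auto)
      also have "\<dots> = (5/4) * (\<epsilon>/\<delta>)" by simp
      also have "\<epsilon>/\<delta> = \<rho>^m" unfolding erho using d0 by simp
      finally show ?thesis using rm by simp
    qed
    have c2: "2*c < \<eta>"
    proof -
      have "r \<le> \<eta>/8" unfolding r_def by simp
      then show ?thesis using cb eta by simp
    qed
    define v0 where "v0 = (p, b, b, b, b)"
    define x0 where "x0 = (b + (1+\<delta>)*b + (1+\<delta>)*b)/p"
    define h0 where "h0 = b/p"
    have p0: "p > 0" using assms by simp
    have x00: "x0 \<ge> 0" unfolding x0_def using b0 p0 d0 by simp
    have h00: "h0 \<ge> 0" unfolding h0_def using b0 p0 by simp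
    have I0: "inv5 \<delta> \<epsilon> x0 h0 c v0"
      unfolding inv5_def v0_def x0_def h0_def using p0 b0 c0 by simp
    define \<mu> where "\<mu> = (1+\<delta>+\<epsilon>)/(1+2*\<delta>)"
    define \<nu> where "\<nu> = (1-\<delta>+2*\<epsilon>)/(1+2*\<delta>)"
    have In: "\<And>n. inv5 \<delta> \<epsilon> (\<mu>^n*x0) (\<nu>^n*h0) c ((stp \<delta> \<epsilon> ^^ n) v0)"
      unfolding \<mu>_def \<nu>_def by (rule inv5_iter[OF d0 d1 e0 e5 c_def x00 h00 I0])
    have F: "\<And>n. tot ((stp \<delta> \<epsilon> ^^ n) v0) > 0 \<and>
        \<bar>fst ((stp \<delta> \<epsilon> ^^ n) v0) / tot ((stp \<delta> \<epsilon> ^^ n) v0) - 1\<bar> \<le> 2*(c + \<mu>^n*x0) + 3*(\<nu>^n*h0)"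
      by (rule inv5_fid[OF In d0])
    have RI: "\<And>n. (mcaepp_round m p ^^ n) (depol p) 0 0
       = emb ((stp \<delta> \<epsilon> ^^ n) v0) 0 0 / tot ((stp \<delta> \<epsilon> ^^ n) v0)"
      using round_iter[where p=p, OF m, folded b_def, folded A_def D_def B_def, folded \<delta>_def \<epsilon>_def v0_def, OF A0] F
      by simp
    have emb0: "\<And>w. emb w 0 0 = fst w" by (auto simp: emb_def split: prod.splits)
    have fid: "\<And>n. \<bar>fidelity_after m p n - 1\<bar> \<le> 2*(c + \<mu>^n*x0) + 3*(\<nu>^n*h0)"
      unfolding fidelity_after_def RI emb0 using F by blast
    have mu: "\<bar>\<mu>\<bar> < 1" unfolding \<mu>_def using d0 e0 e5 by simp
    have nu0: "\<nu> \<ge> 0" unfolding \<nu>_def using d0 d1 e0 e5 by simp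
    have nu1: "\<nu> < 1" unfolding \<nu>_def using d0 d1 e0 e5 by simp
    have nu: "\<bar>\<nu>\<bar> < 1" using nu0 nu1 by simp
    have lim: "(\<lambda>n. 2*(c + \<mu>^n*x0) + 3*(\<nu>^n*h0)) \<longlonglongrightarrow> 2*(c + 0*x0) + 3*(0*h0)"
      by (intro tendsto_intros LIMSEQ_power_zero) (use mu nu in simp_all)
    then have "\<forall>\<^sub>F n in sequentially. 2*(c + \<mu>^n*x0) + 3*(\<nu>^n*h0) < \<eta>"
      using c2 by (intro order_tendstoD(2)) simp_all
    then show "\<forall>\<^sub>F n in sequentially. \<bar>fidelity_after m p n - 1\<bar> < \<eta>"
      by (rule eventually_mono) (use fid in \<open>smt (verit)\<close>)
  qed
qed


end
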